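(* In an unweighted instance, for every facility placement profile $\mathbf{s}$, every rounded client profile $\sigma(\mathbf{s})$ for $\mathbf{s}$ is a client equilibrium.
   Context: Setting: a finite directed graph $H=(V,E)$ whose vertices are clients, all of weight $w(v)=1$ (unweighted); a finite set $F$ of facility agents; a facility placement profile $\mathbf{s}=(s_f)_{f\in F}$ with $s_f\in V$. Let $N(v)=\{v\}\cup\{u:(v,u)\in E\}$, $N_{\mathbf{s}}(v)=\{f\in F:s_f\in N(v)\}$, $A_{\mathbf{s}}(f)=\{v: f\in N_{\mathbf{s}}(v)\}$, $A_{\mathbf{s}}(T)=\bigcup_{f\in T}A_{\mathbf{s}}(f)$, $w(X)=|X|$. A client profile $\sigma(\mathbf{s})$ assigns to each client $v$ numbers $\sigma(\mathbf{s})_{v,f}\in[0,1]$ with $\sigma(\mathbf{s})_{v,f}=0$ for $f\notin N_{\mathbf{s}}(v)$ and $\sum_f\sigma(\mathbf{s})_{v,f}=1$ whenever $N_{\mathbf{s}}(v)\neq\varnothing$. Load $\ell_f=\sum_v\sigma(\mathbf{s})_{v,f}w(v)$; client cost $L_v=w(v)+\sum_{f\in N_{\mathbf{s}}(v)}\sigma(\mathbf{s})_{v,f}\ell_{-v,f}$ with $\ell_{-v,f}=\sum_{u\neq v}\sigma(\mathbf{s})_{u,f}w(u)$. $\sigma(\mathbf{s})$ is a client equilibrium if no client can strictly decrease her cost by unilaterally changing her own distribution. Minimum neighborhood set: for nonempty $F^*\subseteq F$, $V^*\subseteq V$, $\mathrm{MNS}_{\mathbf{s}}(F^*,V^* )$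 is the largest-cardinality subset among the nonempty $T\subseteq F^*$ minimizing $w(A_{\mathbf{s}}(T)\cap V^* )/|T|$. Class set: inductively, while facilities remain, $F_i=\mathrm{MNS}_{\mathbf{s}}(F\setminus\bigcup_{j<i}F_j, V\setminus\bigcup_{j<i}V_j)$, $V_i=A_{\mathbf{s}}(F_i)\setminus\bigcup_{j<i}V_j$, $C_i=(F_i,V_i)$, $\ell(C_i)=w(V_i)/|F_i|$. A client profile $\sigma(\mathbf{s})$ is rounded if for every class $C_i$ and every $f\in F_i$ we have $\ell_f\in\{\lfloor\ell(C_i)\rfloor,\lceil\ell(C_i)\rceil\}$, and for every class $C_i$ and every client $v\in V_i$ there is exactly one $g\in F_i$ with $\sigma(\mathbf{s})_{v,g}=1$. *)

theory Defs
  imports Complex_Main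
begin

(* Unweighted instance: every client has weight 1, so w(X) = card X. *)

definition nbhd :: "('v \<times> 'v) set \<Rightarrow> 'v \<Rightarrow> 'v set" where
  "nbhd E v = {v} \<union> {u. (v, u) \<in> E}"

definition Ns :: "('v \<times> 'v) set \<Rightarrow> 'f set \<Rightarrow> ('f \<Rightarrow> 'v) \<Rightarrow> 'v \<Rightarrow> 'f set" where
  "Ns E F s v = {f \<in> F. s f \<in> nbhd E v}"

definition As :: "'v set \<Rightarrow> ('v \<times> 'v) set \<Rightarrow> 'f set \<Rightarrow> ('f \<Rightarrow> 'v) \<Rightarrow> 'f set \<Rightarrow> 'v set" where
  "As V E F s T = {v \<in> V. \<exists>f\<in>T. f \<in> Ns E F s v}"

definition mns_ratio :: "'v set \<Rightarrow> ('v \<times> 'v) set \<Rightarrow> 'f set \<Rightarrow> ('f \<Rightarrow> 'v) \<Rightarrow> 'v set \<Rightarrow> 'f set \<Rightarrow> real" where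
  "mns_ratio V E F s Vst T = real (card (As V E F s T \<inter> Vst)) / real (card T)"

definition is_MNS :: "'v set \<Rightarrow> ('v \<times> 'v) set \<Rightarrow> 'f set \<Rightarrow> ('f \<Rightarrow> 'v) \<Rightarrow> 'f set \<Rightarrow> 'v set \<Rightarrow> 'f set \<Rightarrow> bool" where
  "is_MNS V E F s Fst Vst T \<longleftrightarrow>
     T \<subseteq> Fst \<and> T \<noteq> {} \<and>
     (\<forall>T'. T' \<subseteq> Fst \<and> T' \<noteq> {} \<longrightarrow> mns_ratio V E F s Vst T \<le> mns_ratio V E F s Vst T') \<and>
     (\<forall>T'. T' \<subseteq> Fst \<and> T' \<noteq> {} \<and> mns_ratio V E F s Vst T' = mns_ratio V E F s Vst T
           \<longrightarrow> card T' \<le> card T)"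

fun is_class_seq :: "'v set \<Rightarrow> ('v \<times> 'v) set \<Rightarrow> 'f set \<Rightarrow> ('f \<Rightarrow> 'v) \<Rightarrow> 'f set \<Rightarrow> 'v set
      \<Rightarrow> ('f set \<times> 'v set) list \<Rightarrow> bool" where
  "is_class_seq V E F s Fr Vr [] \<longleftrightarrow> Fr = {}"
| "is_class_seq V E F s Fr Vr ((Fi, Vi) # cs) \<longleftrightarrow>
     Fr \<noteq> {} \<and> is_MNS V E F s Fr Vr Fi \<and> Vi = As V E F s Fi \<inter> Vr \<and>
     is_class_seq V E F s (Fr - Fi) (Vr - Vi) cs"

definition class_set :: "'v set \<Rightarrow> ('v \<times> 'v) set \<Rightarrow> 'f set \<Rightarrow> ('f \<Rightarrow> 'v) \<Rightarrow> ('f set \<times> 'v set) list \<Rightarrow> bool" where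
  "class_set V E F s cs \<longleftrightarrow> is_class_seq V E F s F V cs"

definition valid_distr :: "('v \<times> 'v) set \<Rightarrow> 'f set \<Rightarrow> ('f \<Rightarrow> 'v) \<Rightarrow> 'v \<Rightarrow> ('f \<Rightarrow> real) \<Rightarrow> bool" where
  "valid_distr E F s v p \<longleftrightarrow>
     (\<forall>f\<in>F. 0 \<le> p f \<and> p f \<le> 1) \<and>
     (\<forall>f\<in>F. f \<notin> Ns E F s v \<longrightarrow> p f = 0) \<and>
     (Ns E F s v \<noteq> {} \<longrightarrow> (\<Sum>f\<in>F. p f) = 1)"

definition client_profile :: "'v set \<Rightarrow> ('v \<times> 'v) set \<Rightarrow> 'f set \<Rightarrow> ('f \<Rightarrow> 'v) \<Rightarrow> ('v \<Rightarrow> 'f \<Rightarrow> real) \<Rightarrow> bool" where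
  "client_profile V E F s \<sigma> \<longleftrightarrow> (\<forall>v\<in>V. valid_distr E F s v (\<sigma> v))"

definition load :: "'v set \<Rightarrow> ('v \<Rightarrow> 'f \<Rightarrow> real) \<Rightarrow> 'f \<Rightarrow> real" where
  "load V \<sigma> f = (\<Sum>v\<in>V. \<sigma> v f)"

definition load_minus :: "'v set \<Rightarrow> ('v \<Rightarrow> 'f \<Rightarrow> real) \<Rightarrow> 'v \<Rightarrow> 'f \<Rightarrow> real" where
  "load_minus V \<sigma> v f = (\<Sum>u\<in>V - {v}. \<sigma> u f)"

definition client_cost :: "'v set \<Rightarrow> ('v \<times> 'v) set \<Rightarrow> 'f set \<Rightarrow> ('f \<Rightarrow> 'v) \<Rightarrow> ('v \<Rightarrow> 'f \<Rightarrow> real) \<Rightarrow> 'v \<Rightarrow> real" where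
  "client_cost V E F s \<sigma> v = 1 + (\<Sum>f\<in>Ns E F s v. \<sigma> v f * load_minus V \<sigma> v f)"

definition client_equilibrium :: "'v set \<Rightarrow> ('v \<times> 'v) set \<Rightarrow> 'f set \<Rightarrow> ('f \<Rightarrow> 'v) \<Rightarrow> ('v \<Rightarrow> 'f \<Rightarrow> real) \<Rightarrow> bool" where
  "client_equilibrium V E F s \<sigma> \<longleftrightarrow>
     client_profile V E F s \<sigma> \<and>
     (\<forall>v\<in>V. \<forall>p. valid_distr E F s v p \<longrightarrow>
        \<not> client_cost V E F s (\<sigma>(v := p)) v < client_cost V E F s \<sigma> v)"

definition rounded :: "'v set \<Rightarrow> ('v \<times> 'v) set \<Rightarrow> 'f set \<Rightarrow> ('f \<Rightarrow> 'v) \<Rightarrow> ('v \<Rightarrow> 'f \<Rightarrow> real) \<Rightarrow> bool" where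
  "rounded V E F s \<sigma> \<longleftrightarrow>
     (\<exists>cs. class_set V E F s cs \<and>
        (\<forall>c \<in> set cs. let Fi = fst c; Vi = snd c in
           (\<forall>f\<in>Fi. load V \<sigma> f \<in> {of_int \<lfloor>real (card Vi) / real (card Fi)\<rfloor>,
                                    of_int \<lceil>real (card Vi) / real (card Fi)\<rceil>}) \<and>
           (\<forall>v\<in>Vi. \<exists>!g. g \<in> Fi \<and> \<sigma> v g = 1)))"

end

theory Submission
  imports Defs
begin

definition rat_c :: "('f set \<times> 'v set) \<Rightarrow> real" where
  "rat_c c = real (card (snd c)) / real (card (fst c))"

lemma As_sub: "As V E F s T \<subseteq> V" unfolding As_def by auto

lemma seq_props:
  assumes "is_class_seq V E F s Fr Vr cs" "c \<in> set cs"
  shows "snd c \<subseteq> Vr \<and> snd c \<subseteq> V \<and> fst c \<subseteq> Fr \<and> fst c \<noteq> {}"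
  using assms
proof (induction cs arbitrary: Fr Vr)
  case Nil then show ?case by simp
next
  case (Cons a cs)
  obtain Fi Vi where a: "a = (Fi, Vi)" by fastforce
  show ?case
  proof (cases "c = a")
    case True
    have "is_MNS V E F s Fr Vr Fi" "Vi = As V E F s Fi \<inter> Vr" using Cons.prems a by auto
    moreover have "Fr - Fi \<subseteq> Fr" by blast
    ultimately show ?thesis using True a As_sub[of V E F s Fi] unfolding is_MNS_def by (simp add: le_infI1)
  next
    case False
    then have "c \<in> set cs" using Cons.prems by auto
    then show ?thesis using Cons.IH[of "Fr - Fi" "Vr - Vi"] Cons.prems a by auto
  qed
qed

lemma cover_v:
  assumes "is_class_seq V E F s Fr Vr cs" "v \<in> Vr" "v \<in> V" "f \<in> Fr" "f \<in> Ns E F s v"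
  shows "\<exists>c\<in>set cs. v \<in> snd c"
  using assms
proof (induction cs arbitrary: Fr Vr)
  case Nil then show ?case by simp
next
  case (Cons a cs)
  obtain Fi Vi where a: "a = (Fi, Vi)" by fastforce
  show ?case
  proof (cases "v \<in> Vi")
    case True then show ?thesis using a by auto
  next
    case False
    have "f \<notin> Fi"
    proof
      assume "f \<in> Fi"
      then have "v \<in> As V E F s Fi" using Cons.prems unfolding As_def by auto
      then show False using False Cons.prems a by auto
    qed
    then show ?thesis using Cons.IH[of "Fr - Fi" "Vr - Vi"] Cons.prems a False by auto
  qed
qed

lemma cover_f:
  assumes "is_class_seq V E F s Fr Vr cs" "f \<in> Fr"
  shows "\<exists>c\<in>set cs. f \<in> fst c"
  using assms
proof (induction cs arbitrary: Fr Vr)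
  case Nil then show ?case by simp
next
  case (Cons a cs)
  obtain Fi Vi where a: "a = (Fi, Vi)" by fastforce
  show ?case using Cons.IH[of "Fr - Fi" "Vr - Vi"] Cons.prems a by (cases "f \<in> Fi") auto
qed

lemma step_le:
  assumes fin: "finite V" "finite Fr"
    and m1: "is_MNS V E F s Fr Vr Fi" and v1: "Vi = As V E F s Fi \<inter> Vr"
    and m2: "is_MNS V E F s (Fr - Fi) (Vr - Vi) Fj" and v2: "Vj = As V E F s Fj \<inter> (Vr - Vi)"
  shows "rat_c (Fi, Vi) \<le> rat_c (Fj, Vj)"
proof -
  have sub1: "Fi \<subseteq> Fr" "Fi \<noteq> {}" using m1 unfolding is_MNS_def by auto
  have sub2: "Fj \<subseteq> Fr - Fi" "Fj \<noteq> {}" using m2 unfolding is_MNS_def by auto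
  have "Fj \<subseteq> Fr" using sub2 by blast
  then have fFi: "finite Fi" "finite Fj" using sub1 fin finite_subset by auto
  define m where "m = real (card Fi)"
  define n where "n = real (card Fj)"
  define a where "a = real (card Vi)"
  define b where "b = real (card Vj)"
  have mpos: "m > 0" using fFi sub1 m_def card_gt_0_iff by auto
  have npos: "n > 0" using fFi sub2 n_def card_gt_0_iff by auto
  have AT: "As V E F s (Fi \<union> Fj) \<inter> Vr = Vi \<union> Vj" using v1 v2 unfolding As_def by auto
  have fV: "finite Vi" "finite Vj" using v1 v2 fin As_sub[of V E F s] finite_subset by blast+
  have dV: "Vi \<inter> Vj = {}" using v2 by auto
  have dF: "Fi \<inter> Fj = {}" using sub2 by auto
  have cT: "real (card (Fi \<union> Fj)) = m + n" using card_Un_disjoint[OF fFi dF] m_def n_def by simp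
  have cA: "real (card (As V E F s (Fi \<union> Fj) \<inter> Vr)) = a + b"
    using AT card_Un_disjoint[OF fV dV] a_def b_def by simp
  have "mns_ratio V E F s Vr Fi \<le> mns_ratio V E F s Vr (Fi \<union> Fj)"
  proof -
    have "Fi \<union> Fj \<subseteq> Fr" "Fi \<union> Fj \<noteq> {}" using sub1 sub2 by auto
    then show ?thesis using m1 unfolding is_MNS_def by blast
  qed
  moreover have "mns_ratio V E F s Vr Fi = a / m" unfolding mns_ratio_def a_def m_def v1 by simp
  moreover have "mns_ratio V E F s Vr (Fi \<union> Fj) = (a + b) / (m + n)"
    unfolding mns_ratio_def using cT cA by simp
  ultimately have "a / m \<le> (a + b) / (m + n)" by simp
  then have "a * (m + n) \<le> (a + b) * m" using mpos npos by (simp add: field_simps)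
  then have "a * n \<le> b * m" by (simp add: algebra_simps)
  then have "a / m \<le> b / n" using mpos npos by (simp add: field_simps)
  then show ?thesis unfolding rat_c_def a_def b_def m_def n_def by simp
qed

lemma mono_seq:
  assumes "is_class_seq V E F s Fr Vr ((Fi, Vi) # cs)" "finite V" "finite Fr"
  shows "\<forall>c\<in>set cs. rat_c (Fi, Vi) \<le> rat_c c"
  using assms
proof (induction cs arbitrary: Fr Vr Fi Vi)
  case Nil then show ?case by simp
next
  case (Cons a cs)
  obtain Fj Vj where a: "a = (Fj, Vj)" by fastforce
  have st: "rat_c (Fi, Vi) \<le> rat_c (Fj, Vj)"
    using step_le[of V Fr E F s Vr Fi Vi Fj Vj] Cons.prems a by auto
  have "\<forall>c\<in>set cs. rat_c (Fj, Vj) \<le> rat_c c"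
    using Cons.IH[of "Fr - Fi" "Vr - Vi" Fj Vj] Cons.prems a by auto
  then show ?case using st a by force
qed

lemma order_Q:
  assumes "is_class_seq V E F s Fr Vr cs" "finite V" "finite Fr"
    and "c \<in> set cs" "c' \<in> set cs" "v \<in> snd c" "f \<in> fst c'" "f \<in> Ns E F s v"
  shows "rat_c c \<le> rat_c c'"
  using assms
proof (induction cs arbitrary: Fr Vr)
  case Nil then show ?case by simp
next
  case (Cons a cs)
  obtain Fi Vi where a: "a = (Fi, Vi)" by fastforce
  have M: "\<forall>c\<in>set cs. rat_c (Fi, Vi) \<le> rat_c c" using mono_seq Cons.prems a by metis
  show ?case
  proof (cases "c = a")
    case True
    have "c' \<noteq> a \<Longrightarrow> c' \<in> set cs" using Cons.prems by auto
    then show ?thesis using M True a order_refl by (cases "c' = a") auto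
  next
    case False
    then have c: "c \<in> set cs" using Cons.prems by auto
    have tl: "is_class_seq V E F s (Fr - Fi) (Vr - Vi) cs" using Cons.prems a by auto
    have P: "snd c \<subseteq> Vr - Vi \<and> snd c \<subseteq> V" using seq_props[OF tl c] by auto
    show ?thesis
    proof (cases "c' \<in> set cs")
      case True
      then show ?thesis using Cons.IH[OF tl] c Cons.prems by auto
    next
      case False
      then have "c' = a" using Cons.prems by auto
      then have "f \<in> Fi" using Cons.prems a by auto
      then have "v \<in> As V E F s Fi" using Cons.prems P unfolding As_def by auto
      then have "v \<in> Vi" using Cons.prems a P by auto
      then show ?thesis using P Cons.prems by auto
    qed
  qed
qed

lemma class_bound:
  assumes "finite V" "finite F" "class_set V E F s cs"
    and rd: "\<forall>c \<in> set cs. (\<forall>f\<in>fst c. load V \<sigma> f \<in> {of_int \<lfloor>rat_c c\<rfloor>, of_int \<lceil>rat_c c\<rceil>})"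
    and "c \<in> set cs" "c' \<in> set cs" "v \<in> snd c" "f \<in> fst c'" "f \<in> Ns E F s v" "g \<in> fst c"
  shows "load V \<sigma> g - 1 \<le> load V \<sigma> f"
proof -
  have seq: "is_class_seq V E F s F V cs" using assms(3) unfolding class_set_def .
  have r: "rat_c c \<le> rat_c c'" using order_Q[OF seq assms(1,2) assms(5-9)] .
  have "of_int \<lfloor>rat_c c\<rfloor> \<le> (of_int \<lfloor>rat_c c'\<rfloor> :: real)" using r floor_mono by simp
  moreover have "load V \<sigma> f \<ge> of_int \<lfloor>rat_c c'\<rfloor>"
    using rd assms(6,8) le_of_int_ceiling[of "rat_c c'"] of_int_floor_le[of "rat_c c'"] by force
  moreover have "load V \<sigma> g \<le> of_int \<lceil>rat_c c\<rceil>"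
    using rd assms(5,10) le_of_int_ceiling[of "rat_c c"] of_int_floor_le[of "rat_c c"] by force
  moreover have "of_int \<lceil>rat_c c\<rceil> \<le> (of_int \<lfloor>rat_c c\<rfloor> :: real) + 1"
    by (simp add: ceiling_altdef)
  ultimately show ?thesis by linarith
qed

theorem mainTheorem9:
  fixes V :: "'v set" and E :: "('v \<times> 'v) set" and F :: "'f set"
    and s :: "'f \<Rightarrow> 'v" and \<sigma> :: "'v \<Rightarrow> 'f \<Rightarrow> real"
  assumes "finite V" and "E \<subseteq> V \<times> V" and "finite F"
    and "\<forall>f\<in>F. s f \<in> V"
    and "client_profile V E F s \<sigma>"
    and "rounded V E F s \<sigma>"
  shows "client_equilibrium V E F s \<sigma>"
  unfolding client_equilibrium_def
proof (intro conjI ballI allI impI)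
  show "client_profile V E F s \<sigma>" by fact
  fix v p
  assume vV: "v \<in> V" and vp: "valid_distr E F s v p"
  obtain cs where cs: "class_set V E F s cs"
    and rd0: "\<forall>c \<in> set cs. (\<forall>f\<in>fst c. load V \<sigma> f \<in> {of_int \<lfloor>rat_c c\<rfloor>, of_int \<lceil>rat_c c\<rceil>}) \<and>
           (\<forall>v\<in>snd c. \<exists>!g. g \<in> fst c \<and> \<sigma> v g = 1)"
    using assms(6) unfolding rounded_def rat_c_def Let_def by blast
  have seq: "is_class_seq V E F s F V cs" using cs unfolding class_set_def .
  have NsF: "Ns E F s v \<subseteq> F" unfolding Ns_def by auto
  have lmeq: "\<And>f. load_minus V (\<sigma>(v := p)) v f = load_minus V \<sigma> v f"
    unfolding load_minus_def by (rule sum.cong) auto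
  show "\<not> client_cost V E F s (\<sigma>(v := p)) v < client_cost V E F s \<sigma> v"
  proof (cases "Ns E F s v = {}")
    case True
    then show ?thesis unfolding client_cost_def by simp
  next
    case False
    then obtain f0 where f0: "f0 \<in> Ns E F s v" by blast
    have f0F: "f0 \<in> F" using f0 NsF by auto
    obtain c where c: "c \<in> set cs" "v \<in> snd c" using cover_v[OF seq vV vV f0F f0] by blast
    obtain g where g: "g \<in> fst c" "\<sigma> v g = 1" using rd0 c by blast
    have gF: "g \<in> F" using seq_props[OF seq c(1)] g by auto
    have vd: "valid_distr E F s v (\<sigma> v)" using assms(5) vV unfolding client_profile_def by auto
    have gN: "g \<in> Ns E F s v"
    proof (rule ccontr)
      assume "g \<notin> Ns E F s v"
      then have "\<sigma> v g = 0" using vd gF unfolding valid_distr_def by auto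
      then show False using g by simp
    qed
    have sum1: "(\<Sum>f\<in>F. \<sigma> v f) = 1" using vd False unfolding valid_distr_def by auto
    have "(\<Sum>f\<in>F. \<sigma> v f) = \<sigma> v g + (\<Sum>f\<in>F - {g}. \<sigma> v f)"
      using sum.remove[OF assms(3) gF] by simp
    then have "(\<Sum>f\<in>F - {g}. \<sigma> v f) = 0" using sum1 g by simp
    moreover have "\<forall>f\<in>F - {g}. 0 \<le> \<sigma> v f" using vd unfolding valid_distr_def by auto
    ultimately have zero: "\<And>f. f \<in> F \<Longrightarrow> f \<noteq> g \<Longrightarrow> \<sigma> v f = 0"
      using sum_nonneg_eq_0_iff[of "F - {g}" "\<sigma> v"] assms(3) by auto
    have loadsplit: "\<And>f. load V \<sigma> f = load_minus V \<sigma> v f + \<sigma> v f"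
      unfolding load_def load_minus_def using sum.remove[OF assms(1) vV] by (simp add: add.commute)
    have bound: "\<And>f. f \<in> Ns E F s v \<Longrightarrow> load V \<sigma> g - 1 \<le> load_minus V \<sigma> v f"
    proof -
      fix f assume fN: "f \<in> Ns E F s v"
      have fF: "f \<in> F" using fN NsF by auto
      obtain c' where c': "c' \<in> set cs" "f \<in> fst c'" using cover_f[OF seq fF] by blast
      have "load V \<sigma> g - 1 \<le> load V \<sigma> f"
        using class_bound[OF assms(1,3) cs _ c(1) c'(1) c(2) c'(2) fN g(1)] rd0 by blast
      then show "load V \<sigma> g - 1 \<le> load_minus V \<sigma> v f"
        using loadsplit[of f] loadsplit[of g] zero[OF fF] g(2) by (cases "f = g") auto
    qed
    have costs: "client_cost V E F s \<sigma> v = 1 + load_minus V \<sigma> v g"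
    proof -
      have "(\<Sum>f\<in>Ns E F s v. \<sigma> v f * load_minus V \<sigma> v f)
          = \<sigma> v g * load_minus V \<sigma> v g + (\<Sum>f\<in>Ns E F s v - {g}. \<sigma> v f * load_minus V \<sigma> v f)"
        using sum.remove[OF finite_subset[OF NsF assms(3)] gN] by simp
      also have "(\<Sum>f\<in>Ns E F s v - {g}. \<sigma> v f * load_minus V \<sigma> v f) = 0"
        using zero NsF by (intro sum.neutral) auto
      finally show ?thesis unfolding client_cost_def using g(2) by simp
    qed
    have pN: "(\<Sum>f\<in>Ns E F s v. p f) = 1"
    proof -
      have "(\<Sum>f\<in>Ns E F s v. p f) = (\<Sum>f\<in>F. p f)"
        using vp NsF assms(3) unfolding valid_distr_def by (intro sum.mono_neutral_left) auto
      then show ?thesis using vp False unfolding valid_distr_def by auto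
    qed
    have pnn: "\<And>f. f \<in> Ns E F s v \<Longrightarrow> 0 \<le> p f" using vp NsF unfolding valid_distr_def by auto
    have "(\<Sum>f\<in>Ns E F s v. p f * (load V \<sigma> g - 1)) \<le> (\<Sum>f\<in>Ns E F s v. p f * load_minus V \<sigma> v f)"
      using bound pnn by (intro sum_mono mult_left_mono) auto
    moreover have "(\<Sum>f\<in>Ns E F s v. p f * (load V \<sigma> g - 1)) = load V \<sigma> g - 1"
      using pN by (simp add: sum_distrib_right[symmetric])
    ultimately have "load V \<sigma> g - 1 \<le> (\<Sum>f\<in>Ns E F s v. p f * load_minus V \<sigma> v f)" by simp
    moreover have "client_cost V E F s (\<sigma>(v := p)) v = 1 + (\<Sum>f\<in>Ns E F s v. p f * load_minus V \<sigma> v f)"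
      unfolding client_cost_def using lmeq by simp
    ultimately show ?thesis using costs loadsplit[of g] g(2) by simp
  qed
qed

end
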